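(* Let $H$ be a cumulative distribution function on $[0,1]$, let $H^{-1}(y)=\inf\{x:H(x)>y\}$, and assume that $f(x)=\frac{d}{dx}H^{-1}(x)$ exists for almost every $x\in[0,1]$ and that there is $\epsilon_0>0$ with $f(x)\ge\epsilon_0$ almost everywhere. Let $X_1,X_2,\dots$ be i.i.d. with distribution function $H$, and for each $K\ge2$ let $D_1,\dots,D_K$ be the spacings of $X_1,\dots,X_{K-1}$. Then $$\frac1K\sum_{i=1}^K\log_K D_i\xrightarrow{\text{a.s.}}-1\quad\text{as }K\to\infty.$$
   Context: Spacings: given $X_1,\dots,X_{K-1}\in[0,1]$ with order statistics $X_{1:K-1}\ge X_{2:K-1}\ge\cdots\ge X_{K-1:K-1}$, the spacings are $D_1=1-X_{1:K-1}$, $D_i=X_{i-1:K-1}-X_{i:K-1}$ for $2\le i\le K-1$, and $D_K=X_{K-1:K-1}$; thus $\sum_{i=1}^KD_i=1$. $\log_K$ denotes logarithm to base $K$. *)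

theory Defs
  imports "HOL-Probability.Probability"
begin

definition gen_inv :: "(real \<Rightarrow> real) \<Rightarrow> real \<Rightarrow> real" where
  "gen_inv H y = Inf {x. H x > y}"

text \<open>Order statistics in decreasing order: order_stat xs i is the i-th largest
  element of xs (1-based), i.e. X_{i:n} with X_{1:n} \<ge> X_{2:n} \<ge> ... .\<close>
definition order_stat :: "real list \<Rightarrow> nat \<Rightarrow> real" where
  "order_stat xs i = rev (sort xs) ! (i - 1)"

definition spacing :: "real list \<Rightarrow> nat \<Rightarrow> real" where
  "spacing xs i = (let K = length xs + 1 in
     if i = 1 then 1 - order_stat xs 1
     else if i = K then order_stat xs (K - 1)
     else order_stat xs (i - 1) - order_stat xs i)"

end

theory Submission
  imports Defs
begin


lemma loc_incr:
  fixes \<phi> :: "real \<Rightarrow> real"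
  assumes ab: "a < b"
  and loc: "\<And>x. x \<in> {a..b} \<Longrightarrow> \<exists>d>0. (\<forall>u. x - d < u \<and> u < x \<and> a \<le> u \<longrightarrow> \<phi> u < \<phi> x)
                     \<and> (\<forall>v. x < v \<and> v < x + d \<and> v \<le> b \<longrightarrow> \<phi> x < \<phi> v)"
  shows "\<phi> a < \<phi> b"
proof -
  define T where "T = {x \<in> {a..b}. \<forall>z. a < z \<and> z \<le> x \<longrightarrow> \<phi> a < \<phi> z}"
  define s where "s = Sup T"
  have aT: "a \<in> T" unfolding T_def using ab by auto
  have bdd: "bdd_above T" unfolding T_def by (auto intro: bdd_aboveI[of _ b])
  have sb: "s \<le> b" unfolding s_def using aT by (intro cSup_least) (auto simp: T_def)
  have below: "\<phi> a < \<phi> z" if zz: "a < z" "z < s" for z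
  proof -
    obtain x where "x \<in> T" "z < x" using zz(2) less_cSup_iff[OF _ bdd] aT unfolding s_def by blast
    then show ?thesis using zz unfolding T_def by auto
  qed
  have sa: "a < s"
  proof -
    obtain d where d: "d > 0" "\<forall>v. a < v \<and> v < a + d \<and> v \<le> b \<longrightarrow> \<phi> a < \<phi> v"
      using loc[of a] ab by auto
    have "min b (a + d/2) \<in> T" unfolding T_def using d ab by auto
    then have "min b (a + d/2) \<le> s" unfolding s_def by (rule cSup_upper[OF _ bdd])
    then show ?thesis using d ab by linarith
  qed
  obtain d where d: "d > 0" "\<forall>u. s - d < u \<and> u < s \<and> a \<le> u \<longrightarrow> \<phi> u < \<phi> s"
      "\<forall>v. s < v \<and> v < s + d \<and> v \<le> b \<longrightarrow> \<phi> s < \<phi> v"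
    using loc[of s] sa sb by auto
  have ps: "\<phi> a < \<phi> s"
  proof -
    define u where "u = max a (s - d/2)"
    have "\<phi> u < \<phi> s" using d sa unfolding u_def by auto
    moreover have "\<phi> a \<le> \<phi> u"
    proof (cases "a < u")
      case True then have "a < s - d/2" unfolding u_def by auto
      then show ?thesis using below[of "s - d/2"] d unfolding u_def by auto
    next
      case False then show ?thesis unfolding u_def by auto
    qed
    ultimately show ?thesis by linarith
  qed
  show ?thesis
  proof (cases "s < b")
    case True
    have "min b (s + d/2) \<in> T"
      unfolding T_def
    proof (safe)
      fix z assume z: "a < z" "z \<le> min b (s + d / 2)"
      show "\<phi> a < \<phi> z"
      proof (cases "z < s")
        case True then show ?thesis using below z by auto
      next
        case False
        show ?thesis
        proof (cases "z = s")
          case True then show ?thesis using ps by simp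
        next
          case False
          then have "\<phi> s < \<phi> z" using d(3) z \<open>\<not> z < s\<close> by auto
          then show ?thesis using ps by linarith
        qed
      qed
    qed (use sa True d in auto)
    then have "min b (s + d/2) \<le> s" unfolding s_def by (rule cSup_upper[OF _ bdd])
    then show ?thesis using True d by linarith
  next
    case False then show ?thesis using ps sb by auto
  qed
qed



lemma slope_aux:
  fixes G :: "real \<Rightarrow> real"
  assumes mono: "\<And>u v. 0 < u \<Longrightarrow> u \<le> v \<Longrightarrow> v < 1 \<Longrightarrow> G u \<le> G v"
  and e: "e > 0"
  and ae: "AE x in lborel. x \<in> {0..1} \<longrightarrow> (\<exists>f. (G has_real_derivative f) (at x) \<and> f \<ge> e)"
  and y: "0 < y" "y < y'" "y' < 1"
  and \<eta>: "\<eta> > 0" and r: "r > 0"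
  shows "(e - \<eta>) * (y' - y) - e * r \<le> G y' - G y"
proof -
  obtain N where N: "{x \<in> space lborel. \<not> (x \<in> {0..1} \<longrightarrow> (\<exists>f. (G has_real_derivative f) (at x) \<and> f \<ge> e))} \<subseteq> N"
    "emeasure lborel N = 0" "N \<in> sets lborel"
    using AE_E[OF ae] by blast
  have Nl: "N \<in> sets lebesgue" using N(3) by simp
  obtain U where U: "open U" "N \<subseteq> U" "(U - N) \<in> lmeasurable" "emeasure lebesgue (U - N) < ennreal r"
    using sets_lebesgue_outer_open[OF Nl r] by blast
  have Ub: "U \<in> sets borel" using U(1) by (simp add: borel_open)
  have "emeasure lebesgue U \<le> emeasure lebesgue (U - N) + emeasure lebesgue N"
    by (rule order_trans[OF emeasure_mono[of U "(U - N) \<union> N"] emeasure_subadditive]) (use Nl U in auto)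
  also have "emeasure lebesgue N = 0" using N by simp
  finally have "emeasure lebesgue U < ennreal r" using U(4) by simp
  then have Ulb: "emeasure lborel U < ennreal r" using Ub by simp
  define q where "q x = measure lborel (U \<inter> {y..x})" for x
  have fin: "emeasure lborel (U \<inter> A) \<noteq> \<infinity>" for A
  proof -
    have "emeasure lborel (U \<inter> A) \<le> emeasure lborel U" by (rule emeasure_mono) (auto simp: Ub)
    then have "emeasure lborel (U \<inter> A) < ennreal r" using Ulb by (rule le_less_trans)
    then show ?thesis by (cases "emeasure lborel (U \<inter> A)") auto
  qed
  have qadd: "q v = q u + measure lborel (U \<inter> {u<..v})" if "y \<le> u" "u \<le> v" for u v
  proof -
    have "U \<inter> {y..v} = (U \<inter> {y..u}) \<union> (U \<inter> {u<..v})" using that by auto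
    then show ?thesis unfolding q_def
      by (simp only:) (rule measure_Union[OF fin fin], auto simp: Ub)
  qed
  have qmono: "q u \<le> q v" if "y \<le> u" "u \<le> v" for u v
    using qadd[OF that] by simp
  have qy: "0 \<le> q y" unfolding q_def by simp
  have qy': "q y' \<le> r"
  proof -
    have "emeasure lborel (U \<inter> {y..y'}) \<le> emeasure lborel U" by (rule emeasure_mono) (auto simp: Ub)
    then have "emeasure lborel (U \<inter> {y..y'}) < ennreal r" using Ulb by simp
    then show ?thesis unfolding q_def using r
      by (simp add: measure_def enn2real_leI less_imp_le)
  qed
  define \<phi> where "\<phi> x = G x - (e - \<eta>) * x + e * q x" for x
  have loc: "\<exists>d>0. (\<forall>u. x - d < u \<and> u < x \<and> y \<le> u \<longrightarrow> \<phi> u < \<phi> x)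
                     \<and> (\<forall>v. x < v \<and> v < x + d \<and> v \<le> y' \<longrightarrow> \<phi> x < \<phi> v)" if x: "x \<in> {y..y'}" for x
  proof (cases "x \<in> U")
    case True
    obtain d where d: "d > 0" "ball x d \<subseteq> U" using U(1) True open_contains_ball by blast
    have inc: "\<phi> u < \<phi> v" if "y \<le> u" "u < v" "v \<le> y'" "{u<..v} \<subseteq> U" for u v
    proof -
      have "U \<inter> {u<..v} = {u<..v}" using that by auto
      then have qv: "q v = q u + (v - u)" using qadd[of u v] that by simp
      have "G u \<le> G v" using that y by (intro mono) auto
      have "\<phi> v - \<phi> u = (G v - G u) + \<eta> * (v - u)" unfolding \<phi>_def qv by (simp add: algebra_simps)
      moreover have "\<eta> * (v - u) > 0" using that \<eta> by simp
      ultimately show ?thesis using \<open>G u \<le> G v\<close> by linarith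
    qed
    show ?thesis
    proof (intro exI[of _ d] conjI allI impI d(1))
      fix u assume u: "x - d < u \<and> u < x \<and> y \<le> u"
      show "\<phi> u < \<phi> x"
        by (rule inc) (use u x d(2) in \<open>auto simp: subset_iff dist_real_def\<close>)
    next
      fix v assume v: "x < v \<and> v < x + d \<and> v \<le> y'"
      show "\<phi> x < \<phi> v"
        by (rule inc) (use v x d(2) in \<open>auto simp: subset_iff dist_real_def\<close>)
    qed
  next
    case False
    then have "x \<notin> N" using U by auto
    then obtain f where f: "(G has_real_derivative f) (at x)" "f \<ge> e"
    proof -
      have "x \<notin> {x \<in> space lborel. \<not> (x \<in> {0..1} \<longrightarrow> (\<exists>f. (G has_real_derivative f) (at x) \<and> f \<ge> e))}"
        using N(1) \<open>x \<notin> N\<close> by blast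
      moreover have "x \<in> {0..1}" using x y by auto
      ultimately show ?thesis using that by auto
    qed
    have "((\<lambda>z. (G z - G x) / (z - x)) \<longlongrightarrow> f) (at x)"
      using f(1) by (simp add: has_field_derivative_iff)
    then have "\<forall>\<^sub>F z in at x. dist ((G z - G x) / (z - x)) f < \<eta>/2"
      using \<eta> by (intro tendstoD) auto
    then obtain d where d: "d > 0" "\<And>z. z \<noteq> x \<Longrightarrow> dist z x < d \<Longrightarrow> dist ((G z - G x) / (z - x)) f < \<eta>/2"
      unfolding eventually_at by blast
    show ?thesis
    proof (intro exI[of _ d] conjI allI impI d(1))
      fix u assume u: "x - d < u \<and> u < x \<and> y \<le> u"
      have "dist ((G u - G x) / (u - x)) f < \<eta>/2" using d(2)[of u] u by (auto simp: dist_real_def)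
      then have "(G u - G x) / (u - x) > e - \<eta>/2" using f(2) unfolding dist_real_def abs_less_iff by linarith
      moreover have "(G u - G x) / (u - x) = (G x - G u) / (x - u)"
        by (metis minus_diff_eq minus_divide_divide)
      ultimately have "(G x - G u) / (x - u) > e - \<eta>/2" by simp
      then have "G x - G u > (e - \<eta>/2) * (x - u)" using u by (simp add: pos_less_divide_eq)
      moreover have "q u \<le> q x" using u by (intro qmono) auto
      moreover have "\<phi> x - \<phi> u = (G x - G u) - (e - \<eta>) * (x - u) + e * (q x - q u)"
        unfolding \<phi>_def by (simp add: algebra_simps)
      moreover have "(e - \<eta>/2) * (x - u) - (e - \<eta>) * (x - u) = \<eta>/2 * (x - u)" by (simp add: field_simps)
      moreover have "\<eta>/2 * (x - u) > 0" using u \<eta> by simp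
      moreover have "e * (q x - q u) \<ge> 0" using \<open>q u \<le> q x\<close> e by simp
      ultimately show "\<phi> u < \<phi> x" by linarith
    next
      fix v assume v: "x < v \<and> v < x + d \<and> v \<le> y'"
      have "dist ((G v - G x) / (v - x)) f < \<eta>/2" using d(2)[of v] v by (auto simp: dist_real_def)
      then have "(G v - G x) / (v - x) > e - \<eta>/2" using f(2) unfolding dist_real_def abs_less_iff by linarith
      then have "G v - G x > (e - \<eta>/2) * (v - x)" using v by (simp add: pos_less_divide_eq)
      moreover have "q x \<le> q v" using v x by (intro qmono) auto
      moreover have "\<phi> v - \<phi> x = (G v - G x) - (e - \<eta>) * (v - x) + e * (q v - q x)"
        unfolding \<phi>_def by (simp add: algebra_simps)
      moreover have "(e - \<eta>/2) * (v - x) - (e - \<eta>) * (v - x) = \<eta>/2 * (v - x)" by (simp add: field_simps)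
      moreover have "\<eta>/2 * (v - x) > 0" using v \<eta> by simp
      moreover have "e * (q v - q x) \<ge> 0" using \<open>q x \<le> q v\<close> e by simp
      ultimately show "\<phi> x < \<phi> v" by linarith
    qed
  qed
  have "\<phi> y < \<phi> y'" by (rule loc_incr[OF y(2) loc])
  moreover have "(e - \<eta>) * (y' - y) = (e - \<eta>) * y' - (e - \<eta>) * y" by (simp add: algebra_simps)
  moreover have "e * q y' \<le> e * r" using qy' e by simp
  moreover have "e * q y \<ge> 0" using qy e by simp
  ultimately show ?thesis unfolding \<phi>_def by linarith
qed





lemma slope:
  fixes G :: "real \<Rightarrow> real"
  assumes mono: "\<And>u v. 0 < u \<Longrightarrow> u \<le> v \<Longrightarrow> v < 1 \<Longrightarrow> G u \<le> G v"
  and e: "e > 0"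
  and ae: "AE x in lborel. x \<in> {0..1} \<longrightarrow> (\<exists>f. (G has_real_derivative f) (at x) \<and> f \<ge> e)"
  and y: "0 < y" "y < y'" "y' < 1"
  shows "e * (y' - y) \<le> G y' - G y"
proof (rule ccontr)
  assume nt: "\<not> e * (y' - y) \<le> G y' - G y"
  define g where "g = e * (y' - y) - (G y' - G y)"
  have g: "g > 0" using nt unfolding g_def by simp
  define r where "r = g / (2 * (y' - y + e))"
  have pos: "y' - y + e > 0" using y e by simp
  have r: "r > 0" unfolding r_def using g pos by simp
  have "(e - r) * (y' - y) - e * r \<le> G y' - G y"
    by (rule slope_aux[OF mono e ae y r r])
  moreover have "(e - r) * (y' - y) - e * r = e * (y' - y) - r * (y' - y + e)" by (simp add: algebra_simps)
  moreover have "r * (y' - y + e) = g / 2" unfolding r_def using pos by (simp add: field_simps)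
  ultimately show False using g g_def by linarith
qed

lemma gen_inv_mono:
  fixes H :: "real \<Rightarrow> real"
  assumes H_neg: "\<And>x. x < 0 \<Longrightarrow> H x = 0" and H_one: "\<And>x. x \<ge> 1 \<Longrightarrow> H x = 1"
  and uv: "0 < u" "u \<le> v" "v < 1"
  shows "gen_inv H u \<le> gen_inv H v"
  unfolding gen_inv_def
proof (rule cInf_superset_mono)
  have "1 \<in> {x. v < H x}" using H_one[of 1] uv by simp
  then show "{x. v < H x} \<noteq> {}" by blast
  show "bdd_below {x. u < H x}"
  proof (rule bdd_belowI)
    fix x assume "x \<in> {x. u < H x}"
    then show "0 \<le> x" using H_neg[of x] uv by (cases "x < 0") auto
  qed
  show "{x. v < H x} \<subseteq> {x. u < H x}" using uv by auto
qed

lemma H_lip: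
  fixes H :: "real \<Rightarrow> real"
  assumes H_mono: "mono H"
  and H_neg: "\<And>x. x < 0 \<Longrightarrow> H x = 0" and H_one: "\<And>x. x \<ge> 1 \<Longrightarrow> H x = 1"
  and e: "e > 0"
  and ae: "AE x in lborel. x \<in> {0..1} \<longrightarrow> (\<exists>f. (gen_inv H has_real_derivative f) (at x) \<and> f \<ge> e)"
  and ab: "a \<le> b"
  shows "H b - H a \<le> (b - a) / e"
proof -
  define p where "p = H a"
  define q where "q = H b"
  have H0: "H x \<ge> 0" for x
  proof (cases "x < 0")
    case True then show ?thesis using H_neg by simp
  next
    case False then have "H (-1) \<le> H x" using H_mono by (simp add: monoD)
    then show ?thesis using H_neg[of "-1"] by simp
  qed
  have H1: "H x \<le> 1" for x
  proof -
    have "H x \<le> H (max x 1)" using H_mono by (simp add: monoD)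
    then show ?thesis using H_one[of "max x 1"] by simp
  qed
  have main: "e * (q - p - 2 * \<epsilon>) \<le> b - a" if \<epsilon>: "0 < \<epsilon>" "2 * \<epsilon> < q - p" for \<epsilon>
  proof -
    define y where "y = p + \<epsilon>"
    define y' where "y' = q - \<epsilon>"
    have yy: "0 < y" "y < y'" "y' < 1" using \<epsilon> H0[of a] H1[of b] unfolding y_def y'_def p_def q_def by auto
    have "e * (y' - y) \<le> gen_inv H y' - gen_inv H y"
      by (rule slope[OF gen_inv_mono[OF H_neg H_one] e ae yy]) auto
    moreover have "gen_inv H y \<ge> a" unfolding gen_inv_def
    proof (rule cInf_greatest)
      have "1 \<in> {x. y < H x}" using H_one[of 1] yy by simp
      then show "{x. y < H x} \<noteq> {}" by blast
      fix x assume "x \<in> {x. y < H x}"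
      then have "y < H x" by simp
      show "a \<le> x"
      proof (rule ccontr)
        assume "\<not> a \<le> x"
        then have "H x \<le> H a" using H_mono by (simp add: monoD)
        then show False using \<open>y < H x\<close> \<epsilon> unfolding y_def p_def by simp
      qed
    qed
    moreover have "gen_inv H y' \<le> b" unfolding gen_inv_def
    proof (rule cInf_lower)
      show "b \<in> {x. y' < H x}" using \<epsilon> unfolding y'_def q_def by simp
      show "bdd_below {x. y' < H x}"
      proof (rule bdd_belowI)
        fix x assume "x \<in> {x. y' < H x}"
        then show "0 \<le> x" using H_neg[of x] yy by (cases "x < 0") auto
      qed
    qed
    moreover have "y' - y = q - p - 2 * \<epsilon>" unfolding y_def y'_def by simp
    ultimately show ?thesis by simp
  qed
  have "e * (q - p) \<le> b - a"
  proof (rule ccontr)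
    assume c: "\<not> ?thesis"
    have qp: "q - p > 0"
    proof (rule ccontr)
      assume "\<not> q - p > 0"
      then have "e * (q - p) \<le> 0" using e by (simp add: mult_nonneg_nonpos)
      then show False using c ab by linarith
    qed
    define \<epsilon> where "\<epsilon> = min ((q - p) / 4) ((e * (q - p) - (b - a)) / (4 * e))"
    have "e * (q - p) - (b - a) > 0" using c by linarith
    then have "(e * (q - p) - (b - a)) / (4 * e) > 0" using e by simp
    moreover have "\<epsilon> \<le> (q - p) / 4" unfolding \<epsilon>_def by (rule min.cobounded1)
    ultimately have \<epsilon>: "0 < \<epsilon>" "2 * \<epsilon> < q - p" unfolding \<epsilon>_def using qp by auto
    have "e * (2 * \<epsilon>) \<le> (e * (q - p) - (b - a)) / 2"
    proof -
      have "\<epsilon> \<le> (e * (q - p) - (b - a)) / (4 * e)" unfolding \<epsilon>_def by (rule min.cobounded2)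
      then have "e * \<epsilon> \<le> e * ((e * (q - p) - (b - a)) / (4 * e))" using e by (intro mult_left_mono) auto
      also have "\<dots> = (e * (q - p) - (b - a)) / 4" using e by simp
      finally show ?thesis by simp
    qed
    moreover have "e * (q - p - 2 * \<epsilon>) = e * (q - p) - e * (2 * \<epsilon>)" by (simp add: algebra_simps)
    moreover have aux: "\<And>X Y Z W::real. Z \<le> (X - Y) / 2 \<Longrightarrow> W = X - Z \<Longrightarrow> \<not> X \<le> Y \<Longrightarrow> Y < W" by argo
    ultimately have "e * (q - p - 2 * \<epsilon>) > b - a" using c by blast
    then show False using main[OF \<epsilon>] by simp
  qed
  then show ?thesis unfolding p_def q_def using e by (simp add: pos_le_divide_eq mult.commute)
qed



locale setting = prob_space M for M :: "'a measure" +
  fixes X :: "nat \<Rightarrow> 'a \<Rightarrow> real" and e :: real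
  assumes e_pos: "e > 0"
  and indep: "indep_vars (\<lambda>_. borel) X {1..}"
  and intv: "\<And>i a b. 1 \<le> i \<Longrightarrow> a \<le> b \<Longrightarrow> prob {\<omega> \<in> space M. a < X i \<omega> \<and> X i \<omega> \<le> b} \<le> (b - a) / e"
  and lo: "\<And>i t. 1 \<le> i \<Longrightarrow> 0 \<le> t \<Longrightarrow> prob {\<omega> \<in> space M. X i \<omega> \<le> t} \<le> t / e"
  and hi: "\<And>i t. 1 \<le> i \<Longrightarrow> 0 \<le> t \<Longrightarrow> prob {\<omega> \<in> space M. 1 - t < X i \<omega>} \<le> t / e"
begin

lemma rv[measurable]: "1 \<le> i \<Longrightarrow> X i \<in> borel_measurable M"
  using indep unfolding indep_vars_def by auto

lemma indep2:
  assumes "1 \<le> j" "1 \<le> l" "j \<noteq> l"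
  shows "indep_var borel (X j) borel (X l)"
proof -
  have "indep_var (PiM {j} (\<lambda>_. borel)) (\<lambda>\<omega>. restrict (\<lambda>i. X i \<omega>) {j})
     (PiM {l} (\<lambda>_. borel)) (\<lambda>\<omega>. restrict (\<lambda>i. X i \<omega>) {l})"
    by (rule indep_var_restrict[OF indep]) (use assms in auto)
  then have "indep_var borel ((\<lambda>f. f j) \<circ> (\<lambda>\<omega>. restrict (\<lambda>i. X i \<omega>) {j}))
     borel ((\<lambda>f. f l) \<circ> (\<lambda>\<omega>. restrict (\<lambda>i. X i \<omega>) {l}))"
    by (rule indep_var_compose) (auto intro: measurable_component_singleton)
  moreover have "(\<lambda>f. f j) \<circ> (\<lambda>\<omega>. restrict (\<lambda>i. X i \<omega>) {j}) = X j" by (auto simp: fun_eq_iff)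
  moreover have "(\<lambda>f. f l) \<circ> (\<lambda>\<omega>. restrict (\<lambda>i. X i \<omega>) {l}) = X l" by (auto simp: fun_eq_iff)
  ultimately show ?thesis by simp
qed

lemma pair:
  assumes jl: "1 \<le> j" "1 \<le> l" "j \<noteq> l" and t: "0 \<le> t"
  shows "prob {\<omega> \<in> space M. \<bar>X j \<omega> - X l \<omega>\<bar> < t} \<le> 2 * t / e"
proof -
  have rvj: "X j \<in> borel_measurable M" and rvl: "X l \<in> borel_measurable M" using jl by (auto intro: rv)
  interpret Pj: prob_space "distr M borel (X j)" by (rule prob_space_distr[OF rvj])
  interpret Pl: prob_space "distr M borel (X l)" by (rule prob_space_distr[OF rvl])
  have eq: "distr M borel (X j) \<Otimes>\<^sub>M distr M borel (X l) = distr M (borel \<Otimes>\<^sub>M borel) (\<lambda>\<omega>. (X j \<omega>, X l \<omega>))"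
    using indep2[OF jl(1-3)] by (simp add: indep_var_distribution_eq)
  define A where "A = {p :: real \<times> real. \<bar>fst p - snd p\<bar> < t}"
  have "A = {p \<in> space (borel \<Otimes>\<^sub>M borel). \<bar>fst p - snd p\<bar> < t}" unfolding A_def by (simp add: space_pair_measure)
  also have "\<dots> \<in> sets (borel \<Otimes>\<^sub>M borel)" by measurable
  finally have A: "A \<in> sets (borel \<Otimes>\<^sub>M borel)" .
  have "emeasure M {\<omega> \<in> space M. \<bar>X j \<omega> - X l \<omega>\<bar> < t} = emeasure (distr M (borel \<Otimes>\<^sub>M borel) (\<lambda>\<omega>. (X j \<omega>, X l \<omega>))) A"
    by (subst emeasure_distr) (use A rvj rvl in \<open>auto simp: A_def Int_def conj_commute\<close>)
  also have "\<dots> = emeasure (distr M borel (X j) \<Otimes>\<^sub>M distr M borel (X l)) A" using eq by simp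
  also have "\<dots> = (\<integral>\<^sup>+x. emeasure (distr M borel (X l)) (Pair x -` A) \<partial>distr M borel (X j))"
    using A by (simp add: Pl.emeasure_pair_measure_alt)
  also have "\<dots> \<le> (\<integral>\<^sup>+x. ennreal (2 * t / e) \<partial>distr M borel (X j))"
  proof (rule nn_integral_mono)
    fix x
    have "Pair x -` A \<subseteq> {y. x - t < y \<and> y \<le> x + t}" unfolding A_def by auto
    then have "emeasure (distr M borel (X l)) (Pair x -` A) \<le> emeasure (distr M borel (X l)) {y. x - t < y \<and> y \<le> x + t}"
      by (intro emeasure_mono) auto
    also have "\<dots> = emeasure M {\<omega> \<in> space M. x - t < X l \<omega> \<and> X l \<omega> \<le> x + t}"
      by (subst emeasure_distr) (auto simp: rvl vimage_def Int_def conj_commute)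
    also have "\<dots> = ennreal (prob {\<omega> \<in> space M. x - t < X l \<omega> \<and> X l \<omega> \<le> x + t})"
      by (simp add: emeasure_eq_measure)
    also have "\<dots> \<le> ennreal ((x + t - (x - t)) / e)"
      using intv[of l "x - t" "x + t"] jl t by (intro ennreal_leI) auto
    finally show "emeasure (distr M borel (X l)) (Pair x -` A) \<le> ennreal (2 * t / e)" by simp
  qed
  also have "\<dots> = ennreal (2 * t / e)" using Pj.emeasure_space_1 by simp
  finally show ?thesis using e_pos t by (simp add: emeasure_eq_measure ennreal_le_iff)
qed

end



lemma det_bounds:
  fixes xs :: "real list" and m t :: real
  assumes ne: "xs \<noteq> []" and m: "0 < m" "m \<le> 1" and t: "0 < t" "t \<le> 1"
  and inr: "\<And>x. x \<in> set xs \<Longrightarrow> m \<le> x \<and> x \<le> 1 - m"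
  and gap: "\<And>j l. j < length xs \<Longrightarrow> l < length xs \<Longrightarrow> j \<noteq> l \<Longrightarrow> m \<le> \<bar>xs!j - xs!l\<bar>"
  shows "(\<Sum>i=1..length xs+1. ln (spacing xs i)) \<le> - real (length xs + 1) * ln (real (length xs + 1))"
    and "real (length xs + 1) * ln t +
           real (card {(j,l). j < length xs \<and> l < length xs \<and> j \<noteq> l \<and> \<bar>xs!j - xs!l\<bar> < t} + 2) * ln m
         \<le> (\<Sum>i=1..length xs+1. ln (spacing xs i))"
proof -
  define n where "n = length xs"
  define K where "K = n + 1"
  define ys where "ys = rev (sort xs)"
  define D where "D i = spacing xs i" for i
  have n1: "n \<ge> 1" using ne unfolding n_def by (cases xs) auto
  have dist: "distinct xs"
    unfolding distinct_conv_nth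
  proof (intro allI impI)
    fix j l assume "j < length xs" "l < length xs" "j \<noteq> l"
    then have "m \<le> \<bar>xs!j - xs!l\<bar>" by (rule gap)
    then show "xs!j \<noteq> xs!l" using m by auto
  qed
  have ylen: "length ys = n" unfolding ys_def n_def by simp
  have yset: "set ys = set xs" unfolding ys_def by simp
  have ydec: "ys!k' < ys!k" if "k < k'" "k' < n" for k k'
  proof -
    have ss: "sorted_wrt (<) (sort xs)" using dist by (simp add: strict_sorted_iff)
    have "sort xs ! (n - 1 - k') < sort xs ! (n - 1 - k)"
      by (rule sorted_wrt_nth_less[OF ss]) (use that in \<open>auto simp: n_def\<close>)
    then show ?thesis unfolding ys_def using that by (simp add: rev_nth n_def)
  qed
  have yin: "ys!k \<in> set xs" if "k < n" for k using that ylen yset nth_mem by metis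
  have Deq: "D i = (if i = 1 then 1 - ys!0 else if i = K then ys!(n-1) else ys!(i-2) - ys!(i-1))"
    if "1 \<le> i" "i \<le> K" for i
  proof -
    have os: "order_stat xs j = ys!(j-1)" for j by (simp add: order_stat_def ys_def)
    have sp: "D i = (if i = 1 then 1 - ys!0 else if i = K then ys!(K-1-1) else ys!(i-1-1) - ys!(i-1))"
      unfolding D_def spacing_def Let_def os K_def n_def by simp
    have "K - 1 - 1 = n - 1" "i - 1 - 1 = i - 2" unfolding K_def by auto
    then show ?thesis using sp by simp
  qed
  have Dm: "m \<le> D i" if ii: "1 \<le> i" "i \<le> K" for i
  proof -
    consider "i = 1" | "i = K" | "2 \<le> i" "i \<le> n" using ii n1 unfolding K_def by linarith
    then show ?thesis
    proof cases
      case 1 then show ?thesis using Deq[OF ii] inr[OF yin[of 0]] n1 by simp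
    next
      case 2 then show ?thesis using Deq[OF ii] inr[OF yin[of "n-1"]] n1 unfolding K_def by simp
    next
      case 3
      have lt: "ys!(i-1) < ys!(i-2)" using 3 by (intro ydec) auto
      have "ys!(i-2) \<noteq> ys!(i-1)" using lt by simp
      have "m \<le> \<bar>ys!(i-2) - ys!(i-1)\<bar>"
      proof -
        have "i-2 < n" using 3 by simp
        then have "ys!(i-2) \<in> set xs" by (rule yin)
        then obtain j where j: "j < length xs" "xs!j = ys!(i-2)" by (auto simp: in_set_conv_nth)
        have "i-1 < n" using 3 by simp
        then have "ys!(i-1) \<in> set xs" by (rule yin)
        then obtain l where l: "l < length xs" "xs!l = ys!(i-1)" by (auto simp: in_set_conv_nth)
        have "j \<noteq> l" using j l lt by auto
        then show ?thesis using gap[OF j(1) l(1)] j l by simp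
      qed
      then show ?thesis using Deq[OF ii] lt 3 unfolding K_def by auto
    qed
  qed
  have Dpos: "0 < D i" if "1 \<le> i" "i \<le> K" for i using Dm[OF that] m by simp
  have sum1: "(\<Sum>i=1..K. D i) = 1"
  proof -
    obtain n' where n': "n = Suc n'" using n1 by (cases n) auto
    have "(\<Sum>i=1..K. D i) = (\<Sum>k=0..n. D (k + 1))"
      unfolding K_def using sum.shift_bounds_cl_nat_ivl[of D 0 1 n] by simp
    also have "\<dots> = (\<Sum>k<n. D (k+1)) + D (n+1)" by (simp add: atLeast0AtMost lessThan_Suc_atMost[symmetric])
    also have "(\<Sum>k<n. D (k+1)) = D 1 + (\<Sum>k<n'. D (k+2))" unfolding n' by (simp only: sum.lessThan_Suc_shift) simp
    also have "(\<Sum>k<n'. D (k+2)) = (\<Sum>k<n'. ys!k - ys!(Suc k))"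
    proof (rule sum.cong)
      fix k assume "k \<in> {..<n'}"
      then show "D (k+2) = ys!k - ys!(Suc k)" using Deq[of "k+2"] n' unfolding K_def by auto
    qed simp
    also have "\<dots> = ys!0 - ys!n'" by (rule sum_lessThan_telescope')
    finally show ?thesis using Deq[of 1] Deq[of "n+1"] n' unfolding K_def by simp
  qed
  show "(\<Sum>i=1..length xs+1. ln (spacing xs i)) \<le> - real (length xs + 1) * ln (real (length xs + 1))"
  proof -
    have Kpos: "real K > 0" unfolding K_def by simp
    have "(\<Sum>i=1..K. ln (real K) + ln (D i)) \<le> (\<Sum>i=1..K. real K * D i - 1)"
    proof (rule sum_mono)
      fix i assume "i \<in> {1..K}"
      then have "0 < D i" using Dpos by auto
      then have "ln (real K * D i) \<le> real K * D i - 1" using Kpos by (intro ln_le_minus_one) simp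
      then show "ln (real K) + ln (D i) \<le> real K * D i - 1" using Kpos \<open>0 < D i\<close> by (simp add: ln_mult)
    qed
    also have "\<dots> = real K * (\<Sum>i=1..K. D i) - real K" by (simp add: sum_subtractf sum_distrib_left)
    also have "\<dots> = 0" using sum1 by simp
    finally have "real K * ln (real K) + (\<Sum>i=1..K. ln (D i)) \<le> 0" by (simp add: sum.distrib)
    then have "(\<Sum>i=1..K. ln (D i)) \<le> - real K * ln (real K)" by linarith
    then show ?thesis unfolding D_def K_def n_def .
  qed
  define S where "S = {i \<in> {1..K}. D i < t}"
  define Sint where "Sint = {i \<in> {2..n}. D i < t}"
  define IP where "IP = {(j,l). j < length xs \<and> l < length xs \<and> j \<noteq> l \<and> \<bar>xs!j - xs!l\<bar> < t}"
  have finIP: "finite IP" unfolding IP_def by (rule finite_subset[of _ "{..<length xs} \<times> {..<length xs}"]) auto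
  have "card Sint \<le> card IP"
  proof -
    define f where "f i = (SOME p. p \<in> IP \<and> xs!(fst p) = ys!(i-2) \<and> xs!(snd p) = ys!(i-1))" for i
    have fI: "f i \<in> IP \<and> xs!(fst (f i)) = ys!(i-2) \<and> xs!(snd (f i)) = ys!(i-1)" if i: "i \<in> Sint" for i
      unfolding f_def
    proof (rule someI_ex)
      have i2: "2 \<le> i" "i \<le> n" "D i < t" using i unfolding Sint_def by auto
      have "i-2 < n" using i2 by simp
      then have "ys!(i-2) \<in> set xs" by (rule yin)
      then obtain j where j: "j < length xs" "xs!j = ys!(i-2)" by (auto simp: in_set_conv_nth)
      have "i-1 < n" using i2 by simp
      then have "ys!(i-1) \<in> set xs" by (rule yin)
      then obtain l where l: "l < length xs" "xs!l = ys!(i-1)" by (auto simp: in_set_conv_nth)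
      have lt: "ys!(i-1) < ys!(i-2)" using i2 by (intro ydec) auto
      have "D i = ys!(i-2) - ys!(i-1)" using Deq[of i] i2 unfolding K_def by auto
      then have "(j,l) \<in> IP" unfolding IP_def using j l lt i2 by auto
      then show "\<exists>p. p \<in> IP \<and> xs!(fst p) = ys!(i-2) \<and> xs!(snd p) = ys!(i-1)" using j l by auto
    qed
    have "inj_on f Sint"
    proof (rule inj_onI)
      fix i i' assume ii: "i \<in> Sint" "i' \<in> Sint" "f i = f i'"
      then have "ys!(i-2) = ys!(i'-2)" using fI[OF ii(1)] fI[OF ii(2)] by metis
      moreover have "i - 2 < n" "i' - 2 < n" using ii unfolding Sint_def by auto
      ultimately have "i - 2 = i' - 2"
        by (metis ydec less_irrefl nat_neq_iff)
      then show "i = i'" using ii unfolding Sint_def by auto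
    qed
    moreover have "f ` Sint \<subseteq> IP" using fI by auto
    ultimately show ?thesis using finIP by (metis card_inj_on_le)
  qed
  have "S \<subseteq> {1, K} \<union> Sint" unfolding S_def Sint_def K_def by auto
  then have "card S \<le> card ({1, K} \<union> Sint)" by (intro card_mono) (auto simp: Sint_def)
  also have "\<dots> \<le> card {1, K} + card Sint" by (rule card_Un_le)
  also have "card {1, K} \<le> 2" by (simp add: card_insert_le_m1)
  finally have cS: "card S \<le> card IP + 2" using \<open>card Sint \<le> card IP\<close> by linarith
  have lnm: "ln m \<le> 0" using m by simp
  have lnt: "ln t \<le> 0" using t by simp
  have "(\<Sum>i=1..K. ln t + (if i \<in> S then ln m else 0)) \<le> (\<Sum>i=1..K. ln (D i))"
  proof (rule sum_mono)
    fix i assume i: "i \<in> {1..K}"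
    show "ln t + (if i \<in> S then ln m else 0) \<le> ln (D i)"
    proof (cases "i \<in> S")
      case True
      have "ln m \<le> ln (D i)" using Dm[of i] i m by simp
      then show ?thesis using True lnt by simp
    next
      case False
      then have "t \<le> D i" using i unfolding S_def by auto
      then have "ln t \<le> ln (D i)" using t by simp
      then show ?thesis using False by simp
    qed
  qed
  moreover have "(\<Sum>i=1..K. ln t + (if i \<in> S then ln m else 0)) = real K * ln t + real (card S) * ln m"
  proof -
    have "S \<subseteq> {1..K}" unfolding S_def by auto
    then have "(\<Sum>i=1..K. (if i \<in> S then ln m else 0)) = real (card S) * ln m"
      by (simp add: sum.If_cases Int_absorb1)
    then show ?thesis by (simp add: sum.distrib)
  qed
  moreover have "real (card IP + 2) * ln m \<le> real (card S) * ln m"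
    using cS lnm by (intro mult_right_mono_neg) auto
  ultimately show "real (length xs + 1) * ln t +
           real (card {(j,l). j < length xs \<and> l < length xs \<and> j \<noteq> l \<and> \<bar>xs!j - xs!l\<bar> < t} + 2) * ln m
         \<le> (\<Sum>i=1..length xs+1. ln (spacing xs i))"
    unfolding IP_def D_def K_def n_def by linarith
qed



context setting
begin

lemma meas_le[measurable]: "1 \<le> j \<Longrightarrow> {\<omega> \<in> space M. X j \<omega> \<le> c} \<in> sets M"
  using rv[of j] by measurable
lemma meas_gt[measurable]: "1 \<le> j \<Longrightarrow> {\<omega> \<in> space M. c < X j \<omega>} \<in> sets M"
  using rv[of j] by measurable
lemma meas_diff[measurable]: "1 \<le> j \<Longrightarrow> 1 \<le> l \<Longrightarrow> {\<omega> \<in> space M. \<bar>X j \<omega> - X l \<omega>\<bar> < c} \<in> sets M"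
  using rv[of j] rv[of l] by measurable

definition "mK K = 1 / real K ^ 4"
definition "Bset K = (\<Union>j\<in>{1..<K}. {\<omega> \<in> space M. X j \<omega> \<le> mK K} \<union> {\<omega> \<in> space M. 1 - mK K < X j \<omega>})
   \<union> (\<Union>p\<in>{p \<in> {1..<K} \<times> {1..<K}. fst p \<noteq> snd p}. {\<omega> \<in> space M. \<bar>X (fst p) \<omega> - X (snd p) \<omega>\<bar> < mK K})"

lemma Bset_sets: "Bset K \<in> sets M"
  unfolding Bset_def
  by (intro sets.Un sets.finite_UN) auto

lemma Bset_prob: assumes K: "K \<ge> 1" shows "prob (Bset K) \<le> 4 / (e * real K ^ 2)"
proof -
  define c where "c = 2 * mK K / e"
  have m0: "mK K \<ge> 0" unfolding mK_def by simp
  define I2 where "I2 = {p \<in> {1..<K} \<times> {1..<K}. fst p \<noteq> snd p}"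
  have "prob (Bset K) \<le> prob (\<Union>j\<in>{1..<K}. {\<omega> \<in> space M. X j \<omega> \<le> mK K} \<union> {\<omega> \<in> space M. 1 - mK K < X j \<omega>})
      + prob (\<Union>p\<in>I2. {\<omega> \<in> space M. \<bar>X (fst p) \<omega> - X (snd p) \<omega>\<bar> < mK K})"
    unfolding Bset_def I2_def by (rule measure_Un_le) (intro sets.finite_UN; auto)+
  also have "prob (\<Union>j\<in>{1..<K}. {\<omega> \<in> space M. X j \<omega> \<le> mK K} \<union> {\<omega> \<in> space M. 1 - mK K < X j \<omega>})
      \<le> (\<Sum>j\<in>{1..<K}. prob ({\<omega> \<in> space M. X j \<omega> \<le> mK K} \<union> {\<omega> \<in> space M. 1 - mK K < X j \<omega>}))"
    by (rule measure_UNION_le) auto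
  also have "\<dots> \<le> (\<Sum>j\<in>{1..<K}. c)"
  proof (rule sum_mono)
    fix j assume j: "j \<in> {1..<K}"
    have "prob ({\<omega> \<in> space M. X j \<omega> \<le> mK K} \<union> {\<omega> \<in> space M. 1 - mK K < X j \<omega>})
       \<le> prob {\<omega> \<in> space M. X j \<omega> \<le> mK K} + prob {\<omega> \<in> space M. 1 - mK K < X j \<omega>}"
      by (rule measure_Un_le) (use j in auto)
    also have "\<dots> \<le> mK K / e + mK K / e" using lo[of j "mK K"] hi[of j "mK K"] j m0 by (intro add_mono) auto
    finally show "prob ({\<omega> \<in> space M. X j \<omega> \<le> mK K} \<union> {\<omega> \<in> space M. 1 - mK K < X j \<omega>}) \<le> c"
      unfolding c_def by simp
  qed
  also have "prob (\<Union>p\<in>I2. {\<omega> \<in> space M. \<bar>X (fst p) \<omega> - X (snd p) \<omega>\<bar> < mK K})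
      \<le> (\<Sum>p\<in>I2. prob {\<omega> \<in> space M. \<bar>X (fst p) \<omega> - X (snd p) \<omega>\<bar> < mK K})"
    by (rule measure_UNION_le) (auto simp: I2_def)
  also have "\<dots> \<le> (\<Sum>p\<in>I2. c)"
  proof (rule sum_mono)
    fix p assume "p \<in> I2"
    then show "prob {\<omega> \<in> space M. \<bar>X (fst p) \<omega> - X (snd p) \<omega>\<bar> < mK K} \<le> c"
      unfolding c_def I2_def using m0 by (intro pair) auto
  qed
  finally have "prob (Bset K) \<le> real (card {1..<K}) * c + real (card I2) * c" by simp
  moreover have "card {1..<K} \<le> K" by simp
  moreover have "card I2 \<le> K * K"
  proof -
    have "card I2 \<le> card ({1..<K} \<times> {1..<K})" unfolding I2_def by (intro card_mono) auto
    moreover have "(K - 1) * (K - 1) \<le> K * K" by (intro mult_le_mono) auto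
    ultimately show ?thesis by simp
  qed
  moreover have c0: "c \<ge> 0" unfolding c_def using m0 e_pos by simp
  ultimately have "prob (Bset K) \<le> real K * c + real (K * K) * c"
    by (smt (verit, best) mult_right_mono of_nat_le_iff)
  also have "\<dots> \<le> 2 * real K ^ 2 * c"
  proof -
    have "real K \<le> real K ^ 2" using K by (simp add: power2_eq_square)
    then have "real K * c \<le> real K ^ 2 * c" using c0 by (rule mult_right_mono)
    then show ?thesis by (simp add: power2_eq_square algebra_simps)
  qed
  also have "\<dots> = 4 / (e * real K ^ 2)"
    unfolding c_def mK_def using K e_pos by (simp add: field_simps power_def)
  finally show ?thesis .
qed

lemma AE_gap:
  "AE \<omega> in M. eventually (\<lambda>K. \<omega> \<in> space M - Bset K) sequentially"
proof (rule borel_cantelli_AE1)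
  show "Bset n \<in> sets M" for n by (rule Bset_sets)
  show "emeasure M (Bset n) < \<infinity>" for n by (simp add: less_top[symmetric])
  show "summable (\<lambda>n. prob (Bset n))"
  proof (rule summable_comparison_test')
    show "summable (\<lambda>n. 4 / e * inverse (real n ^ 2))"
      by (intro summable_mult inverse_power_summable) simp
    fix n :: nat assume "n \<ge> 1"
    then show "norm (prob (Bset n)) \<le> 4 / e * inverse (real n ^ 2)"
      using Bset_prob[of n] by (simp add: field_simps)
  qed
qed

end



context setting
begin

lemma count_markov:
  assumes P: "finite P" "\<And>p. p \<in> P \<Longrightarrow> 1 \<le> fst p \<and> 1 \<le> snd p \<and> fst p \<noteq> snd p"
    and t: "0 \<le> t" and c: "0 < c"
  shows "prob {\<omega> \<in> space M. c \<le> real (card {p \<in> P. \<bar>X (fst p) \<omega> - X (snd p) \<omega>\<bar> < t})}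
    \<le> real (card P) * (2 * t / e) / c"
proof -
  define E where "E p = {\<omega> \<in> space M. \<bar>X (fst p) \<omega> - X (snd p) \<omega>\<bar> < t}" for p
  have E: "E p \<in> sets M" if "p \<in> P" for p unfolding E_def using P(2)[OF that] by auto
  define u where "u \<omega> = (\<Sum>p\<in>P. indicator (E p) \<omega> :: real)" for \<omega>
  have ueq: "real (card {p \<in> P. \<bar>X (fst p) \<omega> - X (snd p) \<omega>\<bar> < t}) = u \<omega>" if "\<omega> \<in> space M" for \<omega>
  proof -
    have "u \<omega> = (\<Sum>p\<in>P. if \<bar>X (fst p) \<omega> - X (snd p) \<omega>\<bar> < t then 1 else 0)"
      unfolding u_def E_def using that by (intro sum.cong) (auto simp: indicator_def)
    also have "\<dots> = real (card {p \<in> P. \<bar>X (fst p) \<omega> - X (snd p) \<omega>\<bar> < t})"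
      using P(1) by (simp add: sum.inter_filter[symmetric])
    finally show ?thesis by simp
  qed
  have int: "integrable M u" unfolding u_def
  proof (rule Bochner_Integration.integrable_sum)
    fix p assume "p \<in> P"
    moreover have "E p \<inter> space M = E p" unfolding E_def by auto
    ultimately show "integrable M (indicator (E p) :: 'a \<Rightarrow> real)"
      using E by (simp add: integrable_indicator_iff less_top[symmetric])
  qed
  have seteq: "{\<omega> \<in> space M. c \<le> real (card {p \<in> P. \<bar>X (fst p) \<omega> - X (snd p) \<omega>\<bar> < t})} = {\<omega> \<in> space M. u \<omega> \<ge> c}"
    using ueq by auto
  have mk: "measure M {\<omega> \<in> space M. u \<omega> \<ge> c} \<le> (\<integral>\<omega>. u \<omega> \<partial>M) / c"
    by (rule integral_Markov_inequality_measure[OF int, where A = "space M"]) (use c in \<open>auto simp: u_def intro!: AE_I2 sum_nonneg\<close>)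
  have ie: "(\<integral>\<omega>. u \<omega> \<partial>M) = (\<Sum>p\<in>P. prob (E p))"
  proof -
    have ii: "integrable M (indicator (E p) :: 'a \<Rightarrow> real)" if "p \<in> P" for p
    proof -
      have "E p \<inter> space M = E p" unfolding E_def by auto
      then show ?thesis using E[OF that] by (simp add: integrable_indicator_iff less_top[symmetric])
    qed
    have "(\<integral>\<omega>. u \<omega> \<partial>M) = (\<Sum>p\<in>P. (\<integral>\<omega>. indicator (E p) \<omega> \<partial>M))"
      unfolding u_def by (rule Bochner_Integration.integral_sum) (rule ii)
    also have "\<dots> = (\<Sum>p\<in>P. prob (E p))"
    proof (rule sum.cong)
      fix p assume "p \<in> P"
      have "E p \<inter> space M = E p" unfolding E_def by auto
      then show "(\<integral>\<omega>. indicator (E p) \<omega> \<partial>M) = prob (E p)" by simp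
    qed simp
    finally show ?thesis .
  qed
  have sl: "(\<Sum>p\<in>P. prob (E p)) \<le> (\<Sum>p\<in>P. 2 * t / e)"
    by (rule sum_mono) (use P(2) t in \<open>auto simp: E_def intro!: pair\<close>)
  have "(\<Sum>p\<in>P. prob (E p)) / c \<le> real (card P) * (2 * t / e) / c"
    using sl c by (intro divide_right_mono) auto
  then have "measure M {\<omega> \<in> space M. u \<omega> \<ge> c} \<le> real (card P) * (2 * t / e) / c"
    using mk ie by simp
  then show ?thesis unfolding seteq .
qed

definition "rr \<delta> = (2::real) powr (-(1 + \<delta>))"
definition "Pm m = {p \<in> {1..<(2::nat)^(m+1)} \<times> {1..<2^(m+1)}. fst p \<noteq> snd p}"
definition "Cset \<delta> m = {\<omega> \<in> space M. \<delta> * 2 ^ m \<le> real (card {p \<in> Pm m. \<bar>X (fst p) \<omega> - X (snd p) \<omega>\<bar> < rr \<delta> ^ (m+1)})}"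

lemma Cset_sets: "Cset \<delta> m \<in> sets M"
proof -
  have "Cset \<delta> m = {\<omega> \<in> space M. \<delta> * 2 ^ m \<le> (\<Sum>p\<in>Pm m. indicator {\<omega> \<in> space M. \<bar>X (fst p) \<omega> - X (snd p) \<omega>\<bar> < rr \<delta> ^ (m+1)} \<omega>)}"
  proof -
    have fin: "finite (Pm m)" unfolding Pm_def by (rule finite_subset[of _ "{1..<(2::nat)^(m+1)} \<times> {1..<2^(m+1)}"]) auto
    have "real (card {p \<in> Pm m. \<bar>X (fst p) \<omega> - X (snd p) \<omega>\<bar> < rr \<delta> ^ (m+1)}) =
      (\<Sum>p\<in>Pm m. indicator {\<omega> \<in> space M. \<bar>X (fst p) \<omega> - X (snd p) \<omega>\<bar> < rr \<delta> ^ (m+1)} \<omega>)"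
      if "\<omega> \<in> space M" for \<omega>
    proof -
      have "(\<Sum>p\<in>Pm m. indicator {\<omega> \<in> space M. \<bar>X (fst p) \<omega> - X (snd p) \<omega>\<bar> < rr \<delta> ^ (m+1)} \<omega> :: real)
        = (\<Sum>p\<in>Pm m. if \<bar>X (fst p) \<omega> - X (snd p) \<omega>\<bar> < rr \<delta> ^ (m+1) then 1 else 0)"
        using that by (intro sum.cong) (auto simp: indicator_def)
      also have "\<dots> = real (card {p \<in> Pm m. \<bar>X (fst p) \<omega> - X (snd p) \<omega>\<bar> < rr \<delta> ^ (m+1)})"
        using fin by (simp add: sum.inter_filter[symmetric])
      finally show ?thesis by simp
    qed
    then show ?thesis unfolding Cset_def by auto
  qed
  also have "\<dots> \<in> sets M"
  proof -
    have "(\<lambda>\<omega>. \<Sum>p\<in>Pm m. indicator {\<omega> \<in> space M. \<bar>X (fst p) \<omega> - X (snd p) \<omega>\<bar> < rr \<delta> ^ (m+1)} \<omega> :: real) \<in> borel_measurable M"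
      by (intro borel_measurable_sum borel_measurable_indicator meas_diff) (auto simp: Pm_def)
    then show ?thesis by measurable
  qed
  finally show ?thesis .
qed

lemma Cset_prob:
  assumes \<delta>: "\<delta> > 0"
  shows "prob (Cset \<delta> m) \<le> 4 / (e * \<delta>) * (2 * rr \<delta>) ^ (m+1)"
proof -
  have fin: "finite (Pm m)" unfolding Pm_def by (rule finite_subset[of _ "{1..<(2::nat)^(m+1)} \<times> {1..<2^(m+1)}"]) auto
  have r0: "rr \<delta> > 0" unfolding rr_def by simp
  have "prob (Cset \<delta> m) \<le> real (card (Pm m)) * (2 * rr \<delta> ^ (m+1) / e) / (\<delta> * 2 ^ m)"
    unfolding Cset_def
    by (rule count_markov[OF fin]) (use \<delta> r0 in \<open>auto simp: Pm_def\<close>)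
  also have "\<dots> \<le> real (4 ^ (m+1)) * (2 * rr \<delta> ^ (m+1) / e) / (\<delta> * 2 ^ m)"
  proof -
    have "card (Pm m) \<le> card ({1..<(2::nat)^(m+1)} \<times> {1..<(2::nat)^(m+1)})" unfolding Pm_def by (intro card_mono) auto
    also have "\<dots> \<le> 2^(m+1) * 2^(m+1)" by (simp only: card_cartesian_product card_atLeastLessThan) (intro mult_le_mono diff_le_self)
    also have "\<dots> = 4^(m+1)" by (simp add: power_mult_distrib[symmetric])
    finally have "real (card (Pm m)) \<le> real (4 ^ (m+1))" by linarith
    then show ?thesis using \<delta> r0 e_pos by (intro divide_right_mono mult_right_mono) auto
  qed
  also have "\<dots> = 4 / (e * \<delta>) * (2 * rr \<delta>) ^ (m+1)"
  proof -
    have "(4::real)^m = 2^m * 2^m" by (simp flip: power_mult_distrib)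
    then show ?thesis using \<delta> e_pos by (simp add: field_simps power_mult_distrib)
  qed
  finally show ?thesis .
qed

lemma AE_count:
  assumes \<delta>: "\<delta> > 0"
  shows "AE \<omega> in M. eventually (\<lambda>m. \<omega> \<in> space M - Cset \<delta> m) sequentially"
proof (rule borel_cantelli_AE1)
  show "Cset \<delta> n \<in> sets M" for n by (rule Cset_sets)
  show "emeasure M (Cset \<delta> n) < \<infinity>" for n by (simp add: less_top[symmetric])
  have q: "2 * rr \<delta> < 1" "0 \<le> 2 * rr \<delta>"
  proof -
    have eq: "-(1+\<delta>) = -\<delta> - 1" by simp
    have "2 * rr \<delta> = 2 * (2 powr (-\<delta>) / 2 powr 1)" unfolding rr_def eq by (subst powr_diff) simp
    also have "\<dots> = 2 powr (-\<delta>)" by simp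
    also have "\<dots> < 2 powr 0" using \<delta> by (intro powr_less_mono) auto
    finally show "2 * rr \<delta> < 1" by simp
    show "0 \<le> 2 * rr \<delta>" unfolding rr_def by simp
  qed
  show "summable (\<lambda>n. prob (Cset \<delta> n))"
  proof (rule summable_comparison_test')
    show "summable (\<lambda>n. 4 / (e * \<delta>) * (2 * rr \<delta>) ^ (n+1))"
      using q by (intro summable_mult summable_ignore_initial_segment[where k=1] summable_geometric) auto
    fix n :: nat assume "n \<ge> 0"
    then show "norm (prob (Cset \<delta> n)) \<le> 4 / (e * \<delta>) * (2 * rr \<delta>) ^ (n+1)"
      using Cset_prob[OF \<delta>, of n] by simp
  qed
qed

end



context setting
begin

lemma rr_bounds: assumes "\<delta> > 0" shows "0 < rr \<delta>" "rr \<delta> < 1"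
proof -
  show "0 < rr \<delta>" unfolding rr_def by simp
  have "rr \<delta> < 2 powr 0" unfolding rr_def using assms by (intro powr_less_mono) auto
  then show "rr \<delta> < 1" by simp
qed

lemma pointwise:
  assumes \<omega>: "\<omega> \<in> space M" and K: "K \<ge> 2" and B: "\<omega> \<notin> Bset K" and \<delta>: "0 < \<delta>" "\<delta> \<le> 1"
    and mK: "2^m \<le> K" "K < 2^(m+1)" and C: "\<omega> \<notin> Cset \<delta> m"
  defines "a \<equiv> (1 / real K) * (\<Sum>i=1..K. log (real K) (spacing (map (\<lambda>j. X j \<omega>) [1..<K]) i))"
  shows "a \<le> -1" and "-1 - 5*\<delta> - (1+\<delta>) * ln 2 / ln (real K) - 8 / real K \<le> a"
proof -
  define xs where "xs = map (\<lambda>j. X j \<omega>) [1..<K]"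
  define S where "S = (\<Sum>i=1..K. ln (spacing xs i))"
  define t where "t = rr \<delta> ^ (m+1)"
  have len: "length xs = K - 1" unfolding xs_def by simp
  have lenK: "length xs + 1 = K" using len K by simp
  have xsn: "xs ! j = X (j+1) \<omega>" if "j < length xs" for j
    using that len unfolding xs_def by (simp add: nth_map_upt)
  have lnK: "ln (real K) > 0" using K by simp
  have aS: "a = S / (real K * ln (real K))"
    unfolding a_def S_def xs_def log_def by (simp add: sum_divide_distrib[symmetric] field_simps)
  have ne: "xs \<noteq> []" using len K by auto
  have m0: "0 < mK K" "mK K \<le> 1" unfolding mK_def using K by auto
  have t0: "0 < t" "t \<le> 1" unfolding t_def using rr_bounds[OF \<delta>(1)]
    by (simp, intro power_le_one) auto
  have inr: "mK K \<le> x \<and> x \<le> 1 - mK K" if xx: "x \<in> set xs" for x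
  proof -
    obtain j where j: "j \<in> {1..<K}" "x = X j \<omega>" using xx unfolding xs_def by auto
    then have "\<not> X j \<omega> \<le> mK K" "\<not> 1 - mK K < X j \<omega>" using B \<omega> unfolding Bset_def by auto
    then show ?thesis using j by auto
  qed
  have gap: "mK K \<le> \<bar>xs!j - xs!l\<bar>" if "j < length xs" "l < length xs" "j \<noteq> l" for j l
  proof -
    have "(j+1, l+1) \<in> {p \<in> {1..<K} \<times> {1..<K}. fst p \<noteq> snd p}" using that len by auto
    then have "\<not> \<bar>X (j+1) \<omega> - X (l+1) \<omega>\<bar> < mK K"
    proof (intro notI)
      assume mem: "(j+1, l+1) \<in> {p \<in> {1..<K} \<times> {1..<K}. fst p \<noteq> snd p}"
        and h: "\<bar>X (j+1) \<omega> - X (l+1) \<omega>\<bar> < mK K"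
      have "\<omega> \<in> (\<Union>p\<in>{p \<in> {1..<K} \<times> {1..<K}. fst p \<noteq> snd p}. {\<omega> \<in> space M. \<bar>X (fst p) \<omega> - X (snd p) \<omega>\<bar> < mK K})"
        using mem h \<omega> by (intro UN_I[of "(j+1, l+1)"]) auto
      then have "\<omega> \<in> Bset K" unfolding Bset_def by (rule UnI2)
      then show False using B by simp
    qed
    then show ?thesis using xsn that by simp
  qed
  note db = det_bounds[OF ne m0 t0 inr gap]
  have up: "S \<le> - real K * ln (real K)" using db(1) unfolding S_def lenK .
  show "a \<le> -1"
  proof -
    have "S / (real K * ln (real K)) \<le> (- real K * ln (real K)) / (real K * ln (real K))"
      using up lnK K by (intro divide_right_mono) auto
    then show ?thesis unfolding aS using lnK K by simp
  qed
  define N where "N = card {(j,l). j < length xs \<and> l < length xs \<and> j \<noteq> l \<and> \<bar>xs!j - xs!l\<bar> < t}"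
  have low: "real K * ln t + real (N + 2) * ln (mK K) \<le> S" using db(2) unfolding S_def lenK N_def .
  have NK: "real N \<le> \<delta> * real K"
  proof -
    define Q where "Q = {p \<in> Pm m. \<bar>X (fst p) \<omega> - X (snd p) \<omega>\<bar> < rr \<delta> ^ (m+1)}"
    have "N \<le> card Q"
    proof -
      have finQ: "finite Q" unfolding Q_def Pm_def
        by (rule finite_subset[of _ "{1..<(2::nat)^(m+1)} \<times> {1..<(2::nat)^(m+1)}"]) auto
      have inj: "inj_on (\<lambda>(j,l). (j+1, l+1)) {(j,l). j < length xs \<and> l < length xs \<and> j \<noteq> l \<and> \<bar>xs!j - xs!l\<bar> < t}"
        by (auto simp: inj_on_def)
      have sub: "(\<lambda>(j,l). (j+1, l+1)) ` {(j,l). j < length xs \<and> l < length xs \<and> j \<noteq> l \<and> \<bar>xs!j - xs!l\<bar> < t} \<subseteq> Q"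
      proof (rule image_subsetI)
        fix p assume p: "p \<in> {(j,l). j < length xs \<and> l < length xs \<and> j \<noteq> l \<and> \<bar>xs!j - xs!l\<bar> < t}"
        obtain j l where jl: "p = (j,l)" by (cases p)
        have j: "j < length xs" "l < length xs" "j \<noteq> l" "\<bar>xs!j - xs!l\<bar> < t" using p jl by auto
        have "j + 1 < 2^(m+1)" "l + 1 < 2^(m+1)" using j(1,2) len mK(2) by auto
        moreover have "\<bar>X (j+1) \<omega> - X (l+1) \<omega>\<bar> < rr \<delta> ^ (m+1)" using j xsn unfolding t_def by simp
        ultimately show "(case p of (j,l) \<Rightarrow> (j+1, l+1)) \<in> Q" unfolding jl Q_def Pm_def using j(3) by auto
      qed
      show ?thesis unfolding N_def by (rule card_inj_on_le[OF inj sub finQ])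
    qed
    moreover have "real (card Q) < \<delta> * 2^m"
    proof -
      have "\<not> \<delta> * 2^m \<le> real (card Q)" using C \<omega> unfolding Cset_def Q_def by blast
      then show ?thesis by linarith
    qed
    moreover have "\<delta> * 2^m \<le> \<delta> * real K"
    proof -
      have "real (2^m) \<le> real K" using mK(1) by linarith
      then show ?thesis using \<delta> by simp
    qed
    ultimately show ?thesis by linarith
  qed
  have lnt: "ln t \<ge> -(1+\<delta>) * ln (2 * real K)"
  proof -
    have "ln t = real (m+1) * ln (rr \<delta>)" unfolding t_def using rr_bounds[OF \<delta>(1)] by (intro ln_realpow)
    also have "ln (rr \<delta>) = -(1+\<delta>) * ln 2" unfolding rr_def by (simp add: ln_powr)
    finally have e0: "ln t = -(1+\<delta>) * (real (m+1) * ln 2)" by simp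
    have e1: "real (m+1) * ln 2 = ln ((2::real) ^ (m+1))" by (rule ln_realpow[symmetric])
    have e2: "ln ((2::real) ^ (m+1)) \<le> ln (2 * real K)"
    proof -
      have "(2::real)^m \<le> real K" using mK(1) by (metis of_nat_le_iff of_nat_numeral of_nat_power)
      then have "(2::real)^(m+1) \<le> 2 * real K" by simp
      moreover have "(0::real) < 2^(m+1)" by simp
      ultimately show ?thesis using K by (subst ln_le_cancel_iff) auto
    qed
    have "-(1+\<delta>) * ln (2 * real K) \<le> -(1+\<delta>) * ln ((2::real) ^ (m+1))"
      using e2 \<delta> by (intro mult_left_mono_neg) auto
    then show ?thesis using e0 e1 by simp
  qed
  have lnm: "ln (mK K) = - 4 * ln (real K)" unfolding mK_def using K by (simp add: ln_div ln_realpow)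
  have "S \<ge> - (1+\<delta>) * real K * ln (2 * real K) - (\<delta> * real K + 2) * 4 * ln (real K)"
  proof -
    have "real K * ln t \<ge> real K * (-(1+\<delta>) * ln (2 * real K))" using lnt K by (intro mult_left_mono) auto
    moreover have "real (N + 2) * ln (mK K) \<ge> (\<delta> * real K + 2) * (- 4 * ln (real K))"
      unfolding lnm using NK lnK by (intro mult_right_mono_neg) auto
    ultimately show ?thesis using low by (simp add: algebra_simps)
  qed
  then have "a \<ge> (- (1+\<delta>) * real K * ln (2 * real K) - (\<delta> * real K + 2) * 4 * ln (real K)) / (real K * ln (real K))"
    unfolding aS using lnK K by (intro divide_right_mono) auto
  also have "(- (1+\<delta>) * real K * ln (2 * real K) - (\<delta> * real K + 2) * 4 * ln (real K)) / (real K * ln (real K))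
     = -1 - 5*\<delta> - (1+\<delta>) * ln 2 / ln (real K) - 8 / real K"
    using lnK K by (simp add: ln_mult field_simps)
  finally show "-1 - 5*\<delta> - (1+\<delta>) * ln 2 / ln (real K) - 8 / real K \<le> a" .
qed

end



lemma asym:
  fixes \<delta> :: real assumes \<delta>: "0 < \<delta>" "\<delta> \<le> 1"
  shows "\<exists>K1. \<forall>K\<ge>K1. 2 \<le> K \<and> (1+\<delta>) * ln 2 / ln (real K) + 8 / real K \<le> \<delta>"
proof -
  define n where "n = nat \<lceil>16 / \<delta>\<rceil>"
  have n16: "real n \<ge> 16 / \<delta>" unfolding n_def by linarith
  have "16 / \<delta> \<ge> 16" using \<delta> by (simp add: field_simps)
  then have n2: "n \<ge> 1" using n16 by linarith
  have pn: "real n < 2 ^ n" using less_exp[of n] by (metis of_nat_less_iff of_nat_numeral of_nat_power)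
  show ?thesis
  proof (intro exI[of _ "2^n"] allI impI conjI)
    fix K :: nat assume K: "2^n \<le> K"
    have "(2::nat) \<le> 2^n" using n2 by (metis one_le_numeral power_increasing power_one_right)
    then show "2 \<le> K" using K by linarith
    have Kr: "(2::real)^n \<le> real K" using K by (metis of_nat_le_iff of_nat_numeral of_nat_power)
    have K16: "real K \<ge> 16 / \<delta>" using n16 pn Kr by linarith
    have Kpos: "real K > 0" using K16 \<delta> by (smt (verit) divide_pos_pos)
    have t2: "8 / real K \<le> \<delta> / 2"
    proof -
      have "0 < real K * (16 / \<delta>)" using Kpos \<delta> by simp
      then have "8 / real K \<le> 8 / (16 / \<delta>)" using K16 \<delta> by (intro divide_left_mono) auto
      also have "\<dots> = \<delta> / 2" by simp
      finally show ?thesis .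
    qed
    have lnK: "ln (real K) \<ge> real n * ln 2"
    proof -
      have "real n * ln 2 = ln ((2::real)^n)" by (rule ln_realpow[symmetric]) 
      also have "\<dots> \<le> ln (real K)" using Kr Kpos by (subst ln_le_cancel_iff) auto
      finally show ?thesis .
    qed
    have ln2: "ln (2::real) > 0" by simp
    have lnK2: "ln (real K) \<ge> 16 / \<delta> * ln 2" using lnK n16 ln2 by (smt (verit) mult_right_mono)
    have lnKp: "16 / \<delta> * ln 2 > 0" using \<delta> ln2 by simp
    have t1: "(1+\<delta>) * ln 2 / ln (real K) \<le> \<delta> / 2"
    proof -
      have lk0: "ln (real K) > 0" using lnK2 lnKp by linarith
      have pp: "0 < ln (real K) * (16 / \<delta> * ln 2)" using lk0 lnKp by (rule mult_pos_pos)
      have "(1+\<delta>) * ln 2 / ln (real K) \<le> (1+\<delta>) * ln 2 / (16 / \<delta> * ln 2)"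
        using lnK2 lnKp \<delta> ln2 by (intro divide_left_mono) (use pp in auto)
      also have "\<dots> = (1+\<delta>) * \<delta> / 16" using ln2 \<delta> by (simp add: field_simps)
      also have "\<dots> \<le> \<delta> / 2" using \<delta> by (simp add: field_simps)
      finally show ?thesis .
    qed
    show "(1+\<delta>) * ln 2 / ln (real K) + 8 / real K \<le> \<delta>" using t1 t2 by linarith
  qed
qed

context setting
begin

theorem main_limit:
  "AE \<omega> in M. (\<lambda>K. (1 / real K) * (\<Sum>i=1..K. log (real K) (spacing (map (\<lambda>j. X j \<omega>) [1..<K]) i)))
     \<longlonglongrightarrow> -1"
proof -
  have "AE \<omega> in M. \<forall>k::nat. eventually (\<lambda>m. \<omega> \<in> space M - Cset (1 / (real k + 1)) m) sequentially"
    by (subst AE_all_countable) (intro allI AE_count, simp add: add_pos_nonneg)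
  moreover note AE_gap
  ultimately show ?thesis
  proof (eventually_elim)
    fix \<omega> assume hC: "\<forall>k::nat. eventually (\<lambda>m. \<omega> \<in> space M - Cset (1 / (real k + 1)) m) sequentially"
      and hB: "eventually (\<lambda>K. \<omega> \<in> space M - Bset K) sequentially"
    define a where "a K = (1 / real K) * (\<Sum>i=1..K. log (real K) (spacing (map (\<lambda>j. X j \<omega>) [1..<K]) i))" for K
    show "a \<longlonglongrightarrow> -1"
    proof (rule tendstoI)
      fix r :: real assume r: "r > 0"
      define k where "k = nat \<lceil>6 / r\<rceil>"
      define \<delta> where "\<delta> = 1 / (real k + 1)"
      have \<delta>: "0 < \<delta>" "\<delta> \<le> 1" unfolding \<delta>_def by (auto simp: field_simps)
      have "real k \<ge> 6 / r" unfolding k_def by linarith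
      then have "6 / r < real k + 1" by linarith
      then have "6 < r * (real k + 1)" using r by (simp add: field_simps)
      then have d6: "6 * \<delta> < r" unfolding \<delta>_def by (simp add: field_simps)
      obtain M0 where M0: "\<And>m. m \<ge> M0 \<Longrightarrow> \<omega> \<in> space M - Cset \<delta> m"
        using hC[rule_format, of k] unfolding \<delta>_def eventually_sequentially by blast
      obtain K0 where K0: "\<And>K. K \<ge> K0 \<Longrightarrow> \<omega> \<in> space M - Bset K"
        using hB unfolding eventually_sequentially by blast
      obtain K1 where K1: "\<And>K. K \<ge> K1 \<Longrightarrow> 2 \<le> K \<and> (1+\<delta>) * ln 2 / ln (real K) + 8 / real K \<le> \<delta>"
        using asym[OF \<delta>] by blast
      show "eventually (\<lambda>K. dist (a K) (-1) < r) sequentially"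
        unfolding eventually_sequentially
      proof (intro exI[of _ "max K0 (max K1 (2^M0))"] allI impI)
        fix K assume K: "max K0 (max K1 (2^M0)) \<le> K"
        have K2: "2 \<le> K" and bnd: "(1+\<delta>) * ln 2 / ln (real K) + 8 / real K \<le> \<delta>" using K1[of K] K by auto
        have \<omega>: "\<omega> \<in> space M" "\<omega> \<notin> Bset K" using K0[of K] K by auto
        obtain m where m: "2^m \<le> K" "K < 2^(m+1)" using ex_power_ivl1[of 2 K] K2 by auto
        have "(2::nat)^M0 < 2^(m+1)" using K m by linarith
        then have "M0 < m + 1" by (rule power_less_imp_less_exp[rotated]) simp
        then have "M0 \<le> m" by simp
        then have C: "\<omega> \<notin> Cset \<delta> m" using M0 by auto
        note pw = pointwise[OF \<omega>(1) K2 \<omega>(2) \<delta> m C]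
        have up: "a K \<le> -1" using pw(1) unfolding a_def .
        have lo: "-1 - 5*\<delta> - (1+\<delta>) * ln 2 / ln (real K) - 8 / real K \<le> a K" using pw(2) unfolding a_def .
        have "\<bar>a K - (-1)\<bar> \<le> 6 * \<delta>" using up lo bnd by linarith
        then show "dist (a K) (-1) < r" using d6 by (simp add: dist_real_def)
      qed
    qed
  qed
qed

end



theorem corollary1:
  fixes M :: "'a measure" and H :: "real \<Rightarrow> real" and X :: "nat \<Rightarrow> 'a \<Rightarrow> real"
  assumes "prob_space M"
    and H_mono: "mono H"
    and H_rcont: "\<And>x. continuous (at_right x) H"
    and H_neg: "\<And>x. x < 0 \<Longrightarrow> H x = 0"
    and H_one: "\<And>x. x \<ge> 1 \<Longrightarrow> H x = 1"
    and deriv_bound: "\<exists>\<epsilon>0>0. AE x in lborel. x \<in> {0..1} \<longrightarrow>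
        (\<exists>f. (gen_inv H has_real_derivative f) (at x) \<and> f \<ge> \<epsilon>0)"
    and indep: "prob_space.indep_vars M (\<lambda>_. borel) X {1..}"
    and distr: "\<And>i x. i \<ge> 1 \<Longrightarrow> measure M {\<omega> \<in> space M. X i \<omega> \<le> x} = H x"
  shows "AE \<omega> in M. (\<lambda>K. (1 / real K) *
            (\<Sum>i = 1..K. log (real K) (spacing (map (\<lambda>j. X j \<omega>) [1..<K]) i)))
          \<longlonglongrightarrow> -1"
proof -
  interpret P: prob_space M by fact
  obtain e where e: "e > 0" and ae: "AE x in lborel. x \<in> {0..1} \<longrightarrow>
        (\<exists>f. (gen_inv H has_real_derivative f) (at x) \<and> f \<ge> e)"
    using deriv_bound by blast
  have lip: "H b - H a \<le> (b - a) / e" if "a \<le> b" for a b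
    by (rule H_lip[OF H_mono H_neg H_one e ae that])
  have rv: "X i \<in> borel_measurable M" if "1 \<le> i" for i
    using indep that unfolding P.indep_vars_def by auto
  have sle: "{\<omega> \<in> space M. X i \<omega> \<le> c} \<in> sets M" if "1 \<le> i" for i c
    using rv[OF that] by measurable
  have H0: "H 0 \<le> 0"
  proof (rule ccontr)
    assume "\<not> H 0 \<le> 0"
    then have pos: "H 0 > 0" by simp
    have "H 0 - H (- (H 0 * e / 2)) \<le> (0 - (- (H 0 * e / 2))) / e" using pos e by (intro lip) simp
    moreover have "H (- (H 0 * e / 2)) = 0" using pos e by (intro H_neg) simp
    ultimately have "H 0 \<le> H 0 / 2" using e by simp
    then show False using pos by simp
  qed
  interpret S: setting M X e
  proof unfold_locales
    show "e > 0" by (rule e)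
    show "P.indep_vars (\<lambda>_. borel) X {1..}" by (rule indep)
  next
    fix i :: nat and a b :: real assume i: "1 \<le> i" and ab: "a \<le> b"
    have "{\<omega> \<in> space M. a < X i \<omega> \<and> X i \<omega> \<le> b} = {\<omega> \<in> space M. X i \<omega> \<le> b} - {\<omega> \<in> space M. X i \<omega> \<le> a}" by auto
    then have "P.prob {\<omega> \<in> space M. a < X i \<omega> \<and> X i \<omega> \<le> b} = H b - H a"
      using sle[OF i] ab distr[OF i] by (simp add: P.finite_measure_Diff subset_iff)
    then show "P.prob {\<omega> \<in> space M. a < X i \<omega> \<and> X i \<omega> \<le> b} \<le> (b - a) / e" using lip[OF ab] by simp
  next
    fix i :: nat and t :: real assume i: "1 \<le> i" and t: "0 \<le> t"
    have "H t - H 0 \<le> (t - 0) / e" using t by (intro lip)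
    then show "P.prob {\<omega> \<in> space M. X i \<omega> \<le> t} \<le> t / e" using distr[OF i] H0 by simp
  next
    fix i :: nat and t :: real assume i: "1 \<le> i" and t: "0 \<le> t"
    have "{\<omega> \<in> space M. 1 - t < X i \<omega>} = space M - {\<omega> \<in> space M. X i \<omega> \<le> 1 - t}" by auto
    then have "P.prob {\<omega> \<in> space M. 1 - t < X i \<omega>} = 1 - H (1 - t)"
      using sle[OF i] distr[OF i] by (simp add: P.prob_compl)
    moreover have "H 1 - H (1 - t) \<le> (1 - (1 - t)) / e" using t by (intro lip) simp
    ultimately show "P.prob {\<omega> \<in> space M. 1 - t < X i \<omega>} \<le> t / e" using H_one[of 1] by simp
  qed
  show ?thesis by (rule S.main_limit)
qed


end
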